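(* Let $\Omega\subset\mathbb{R}^2$ be an open, smooth, bounded and uniformly convex domain, $\varphi,\psi\in C^\infty(\overline\Omega)$ with $\inf_{\partial\Omega}\psi>0$, and let $u\in C^\infty(\overline\Omega)$ be a uniformly convex solution of $$\sum_{i,j=1}^2U^{ij}w_{ij}=-|Du|^2\Delta u-2\sum_{i,j=1}^2u_iu_ju_{ij}\ \text{in }\Omega,\quad w=(\det D^2u)^{-1}\ \text{in }\Omega,\quad u=\varphi,\ w=\psi\ \text{on }\partial\Omega,$$ with $(U^{ij})=(\det D^2u)(D^2u)^{-1}$. Then there is a constant $C>1$ depending only on $\Omega$, $\varphi$, $\psi$ (through $\inf_{\partial\Omega}\psi$ and bounds on $\psi$) such that $\sup_\Omega|Du|\le C$ and $$C^{-1}\le\det D^2u\le C\quad\text{in }\Omega.$$ *)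

theory Defs
  imports "HOL-Analysis.Analysis"
begin

type_synonym pt = "real ^ 2"

definition pd :: "2 \<Rightarrow> (pt \<Rightarrow> real) \<Rightarrow> pt \<Rightarrow> real" where
  "pd i f x = frechet_derivative f (at x) (axis i 1)"

fun iter_pd :: "2 list \<Rightarrow> (pt \<Rightarrow> real) \<Rightarrow> pt \<Rightarrow> real" where
  "iter_pd [] f = f"
| "iter_pd (i # is) f = pd i (iter_pd is f)"

definition smooth_on :: "pt set \<Rightarrow> (pt \<Rightarrow> real) \<Rightarrow> bool" where
  "smooth_on S f \<longleftrightarrow> (\<forall>is. iter_pd is f differentiable_on S)"

definition smooth_upto :: "pt set \<Rightarrow> (pt \<Rightarrow> real) \<Rightarrow> bool" where
  "smooth_upto \<Omega> f \<longleftrightarrow> (\<exists>F. smooth_on UNIV F \<and> (\<forall>x\<in>closure \<Omega>. F x = f x))"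

definition grad :: "(pt \<Rightarrow> real) \<Rightarrow> pt \<Rightarrow> pt" where
  "grad f x = (\<chi> i. pd i f x)"

definition hess :: "(pt \<Rightarrow> real) \<Rightarrow> pt \<Rightarrow> real^2^2" where
  "hess f x = (\<chi> i j. pd i (pd j f) x)"

definition lap :: "(pt \<Rightarrow> real) \<Rightarrow> pt \<Rightarrow> real" where
  "lap f x = (\<Sum>i\<in>UNIV. pd i (pd i f) x)"

definition unif_pos_def_on :: "pt set \<Rightarrow> (pt \<Rightarrow> real^2^2) \<Rightarrow> bool" where
  "unif_pos_def_on S H \<longleftrightarrow> (\<exists>c>0. \<forall>x\<in>S. \<forall>\<xi>::pt. \<xi> \<bullet> (H x *v \<xi>) \<ge> c * (norm \<xi>)\<^sup>2)"

definition smooth_unif_convex_domain :: "pt set \<Rightarrow> bool" where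
  "smooth_unif_convex_domain \<Omega> \<longleftrightarrow>
     (\<exists>\<rho>. smooth_on UNIV \<rho> \<and> \<Omega> = {x. \<rho> x < 0} \<and>
          (\<forall>x. \<rho> x = 0 \<longrightarrow> grad \<rho> x \<noteq> 0) \<and>
          unif_pos_def_on (closure \<Omega>) (hess \<rho>))"

definition is_solution ::
  "pt set \<Rightarrow> (pt \<Rightarrow> real) \<Rightarrow> (pt \<Rightarrow> real) \<Rightarrow> (pt \<Rightarrow> real) \<Rightarrow> (pt \<Rightarrow> real) \<Rightarrow> bool" where
  "is_solution \<Omega> \<phi> \<psi> u w \<longleftrightarrow>
     smooth_upto \<Omega> u \<and> unif_pos_def_on \<Omega> (hess u) \<and>
     continuous_on (closure \<Omega>) w \<and>
     (\<forall>x\<in>\<Omega>. w x = 1 / det (hess u x)) \<and>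
     (\<forall>x\<in>\<Omega>. (let U = det (hess u x) *\<^sub>R matrix_inv (hess u x) in
         (\<Sum>i\<in>UNIV. \<Sum>j\<in>UNIV. U $ i $ j * pd i (pd j w) x))
        = - (norm (grad u x))\<^sup>2 * lap u x
          - 2 * (\<Sum>i\<in>UNIV. \<Sum>j\<in>UNIV. grad u x $ i * grad u x $ j * pd i (pd j u) x)) \<and>
     (\<forall>x\<in>frontier \<Omega>. u x = \<phi> x) \<and>
     (\<forall>x\<in>frontier \<Omega>. w x = \<psi> x)"

end

theory Submission
  imports Defs
begin


lemma pd_cong:
  assumes "open S" "x \<in> S" "\<And>y. y \<in> S \<Longrightarrow> f y = g y"
  shows "pd i f x = pd i g x"
proof -
  have "\<And>D. (f has_derivative D) (at x) \<longleftrightarrow> (g has_derivative D) (at x)"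
  proof
    fix D assume "(f has_derivative D) (at x)"
    then show "(g has_derivative D) (at x)"
      by (rule has_derivative_transform_within_open[OF _ assms(1,2)]) (rule assms(3))
  next
    fix D assume "(g has_derivative D) (at x)"
    then show "(f has_derivative D) (at x)"
      by (rule has_derivative_transform_within_open[OF _ assms(1,2)]) (rule assms(3)[symmetric])
  qed
  then show ?thesis unfolding pd_def frechet_derivative_def by simp
qed

lemma diff_cong:
  assumes "open S" "x \<in> S" "\<And>y. y \<in> S \<Longrightarrow> f y = g y" "f differentiable (at x)"
  shows "g differentiable (at x)"
  using assms(4) unfolding differentiable_def
  using has_derivative_transform_within_open[OF _ assms(1,2), of f _ UNIV g] assms(3) by blast

lemma pd_cong_on:
  assumes "open S" "\<And>y. y \<in> S \<Longrightarrow> f y = g y"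
  shows "\<And>y. y \<in> S \<Longrightarrow> pd i f y = pd i g y"
  by (rule pd_cong[OF assms(1) _ assms(2)])

lemma pd_has:
  assumes "(f has_derivative D) (at x)"
  shows "pd i f x = D (axis i 1)"
  using frechet_derivative_at[OF assms] unfolding pd_def by simp

lemma vec2_expand: "(\<xi>::real^2) = \<xi>$1 *\<^sub>R axis 1 1 + \<xi>$2 *\<^sub>R axis 2 1"
  by (simp add: vec_eq_iff forall_2 axis_def)

lemma line_deriv:
  fixes f :: "pt \<Rightarrow> real"
  assumes "f differentiable (at (z + t *\<^sub>R \<xi>))"
  shows "((\<lambda>s. f (z + s *\<^sub>R \<xi>)) has_real_derivative (\<Sum>j\<in>UNIV. \<xi>$j * pd j f (z + t *\<^sub>R \<xi>))) (at t)"
proof -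
  define D where "D = frechet_derivative f (at (z + t *\<^sub>R \<xi>))"
  have fd: "(f has_derivative D) (at (z + t *\<^sub>R \<xi>))"
    using assms unfolding D_def frechet_derivative_works .
  have bl: "bounded_linear D" using has_derivative_bounded_linear[OF fd] .
  have ld: "((\<lambda>s. z + s *\<^sub>R \<xi>) has_derivative (\<lambda>h. h *\<^sub>R \<xi>)) (at t)"
    by (auto intro!: derivative_eq_intros)
  have c: "((\<lambda>s. f (z + s *\<^sub>R \<xi>)) has_derivative (\<lambda>h. D (h *\<^sub>R \<xi>))) (at t)"
    using has_derivative_compose[OF ld fd] by (simp add: o_def)
  have e: "D (h *\<^sub>R \<xi>) = (\<Sum>j\<in>UNIV. \<xi>$j * pd j f (z + t *\<^sub>R \<xi>)) * h" for h
  proof -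
    have "D (h *\<^sub>R \<xi>) = h * D \<xi>" using linear_scale[OF bounded_linear.linear[OF bl]] by simp
    also have "D \<xi> = \<xi>$1 * D (axis 1 1) + \<xi>$2 * D (axis 2 1)"
      by (subst vec2_expand) (simp add: linear_add[OF bounded_linear.linear[OF bl]] linear_scale[OF bounded_linear.linear[OF bl]])
    finally show ?thesis using pd_has[OF fd] by (simp add: sum_2 algebra_simps)
  qed
  have "(\<lambda>h. D (h *\<^sub>R \<xi>)) = (*) (\<Sum>j\<in>UNIV. \<xi>$j * pd j f (z + t *\<^sub>R \<xi>))"
    using e by (simp add: fun_eq_iff mult.commute)
  then show ?thesis unfolding has_field_derivative_def using c by simp
qed

lemma min_second_1d:
  fixes g g' :: "real \<Rightarrow> real"
  assumes "\<delta> > 0" "\<And>s. \<bar>s\<bar> < \<delta> \<Longrightarrow> (g has_real_derivative g' s) (at s)"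
    "(g' has_real_derivative G) (at 0)" "\<And>s. \<bar>s\<bar> < \<delta> \<Longrightarrow> g 0 \<le> g s"
  shows "G \<ge> 0"
proof (rule ccontr)
  assume "\<not> G \<ge> 0" then have G: "G < 0" by simp
  have g0: "g' 0 = 0"
    using DERIV_local_min[OF assms(2)[of 0] assms(1)] assms(1,4) by simp
  obtain d where d: "d > 0" "\<And>h. h > 0 \<Longrightarrow> h < d \<Longrightarrow> g' 0 > g' (0 + h)"
    using DERIV_neg_dec_right[OF assms(3) G] by blast
  define h where "h = min d \<delta> / 2"
  have h: "h > 0" "h < d" "h < \<delta>" using d assms(1) by (auto simp: h_def)
  obtain z where z: "0 < z" "z < h" "g h - g 0 = (h - 0) * g' z"
    using MVT2[OF h(1), of g g'] assms(2) h by force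
  have "g' z < 0" using d(2)[of z] z h g0 by simp
  then have "g h - g 0 < 0" using z h by (simp add: mult_pos_neg)
  moreover have "g 0 \<le> g h" using assms(4)[of h] h by simp
  ultimately show False by simp
qed

definition quadf :: "(pt \<Rightarrow> real) \<Rightarrow> pt \<Rightarrow> pt \<Rightarrow> real" where
  "quadf f z \<xi> = (\<Sum>i\<in>UNIV. \<Sum>j\<in>UNIV. \<xi>$i * \<xi>$j * pd i (pd j f) z)"

lemma min_hess:
  assumes "open S" "z \<in> S" "\<And>y. y \<in> S \<Longrightarrow> f differentiable (at y)"
    "\<And>j. pd j f differentiable (at z)" "\<And>y. y \<in> S \<Longrightarrow> f z \<le> f y"
  shows "quadf f z \<xi> \<ge> 0"
proof -
  obtain e where e: "e > 0" "ball z e \<subseteq> S" using assms(1,2) open_contains_ball by blast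
  define \<delta> where "\<delta> = e / (norm \<xi> + 1)"
  have np: "norm \<xi> + 1 > 0" using norm_ge_zero[of \<xi>] by linarith
  have \<delta>: "\<delta> > 0" using e np by (simp add: \<delta>_def)
  have inS: "z + s *\<^sub>R \<xi> \<in> S" if "\<bar>s\<bar> < \<delta>" for s
  proof -
    have "norm (s *\<^sub>R \<xi>) = \<bar>s\<bar> * norm \<xi>" by simp
    also have "\<dots> \<le> \<bar>s\<bar> * (norm \<xi> + 1)" by (simp add: mult_left_mono)
    also have "\<dots> < \<delta> * (norm \<xi> + 1)" using that np by simp
    also have "\<dots> = e" using np by (simp add: \<delta>_def)
    finally show ?thesis using e(2) by (auto simp: dist_norm)
  qed
  show ?thesis
  proof (rule min_second_1d[OF \<delta>])
    fix s :: real assume "\<bar>s\<bar> < \<delta>"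
    then show "((\<lambda>s. f (z + s *\<^sub>R \<xi>)) has_real_derivative
       (\<lambda>s. \<Sum>j\<in>UNIV. \<xi>$j * pd j f (z + s *\<^sub>R \<xi>)) s) (at s)"
      using line_deriv[of f z s \<xi>] assms(3) inS by simp
  next
    fix s :: real assume "\<bar>s\<bar> < \<delta>"
    then show "(\<lambda>s. f (z + s *\<^sub>R \<xi>)) 0 \<le> (\<lambda>s. f (z + s *\<^sub>R \<xi>)) s"
      using assms(5) inS by simp
  next
    have "((\<lambda>s. pd j f (z + s *\<^sub>R \<xi>)) has_real_derivative (\<Sum>i\<in>UNIV. \<xi>$i * pd i (pd j f) z)) (at 0)" for j
      using line_deriv[of "pd j f" z 0 \<xi>] assms(4) by simp
    then have "((\<lambda>s. \<Sum>j\<in>UNIV. \<xi>$j * pd j f (z + s *\<^sub>R \<xi>)) has_real_derivative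
        (\<Sum>j\<in>UNIV. \<xi>$j * (\<Sum>i\<in>UNIV. \<xi>$i * pd i (pd j f) z))) (at 0)"
      by (auto intro!: derivative_eq_intros simp: mult.commute)
    moreover have "(\<Sum>j\<in>UNIV. \<xi>$j * (\<Sum>i\<in>UNIV. \<xi>$i * pd i (pd j f) z)) = quadf f z \<xi>"
      unfolding quadf_def by (simp add: sum_2 algebra_simps)
    ultimately show "((\<lambda>s. \<Sum>j\<in>UNIV. \<xi>$j * pd j f (z + s *\<^sub>R \<xi>)) has_real_derivative quadf f z \<xi>) (at 0)"
      by simp
  qed
qed

lemma fd_works: "f differentiable (at x) \<Longrightarrow> (f has_derivative frechet_derivative f (at x)) (at x)"
  using frechet_derivative_works by blast

lemma pd_eq_fd: "pd i f x = frechet_derivative f (at x) (axis i 1)"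
  by (simp add: pd_def)

lemma pd_add:
  assumes "f differentiable (at x)" "g differentiable (at x)"
  shows "pd i (\<lambda>y. f y + g y) x = pd i f x + pd i g x"
  using pd_has[OF has_derivative_add[OF fd_works[OF assms(1)] fd_works[OF assms(2)]]]
  by (simp add: pd_eq_fd)

lemma pd_diff:
  assumes "f differentiable (at x)" "g differentiable (at x)"
  shows "pd i (\<lambda>y. f y - g y) x = pd i f x - pd i g x"
  using pd_has[OF has_derivative_diff[OF fd_works[OF assms(1)] fd_works[OF assms(2)]]]
  by (simp add: pd_eq_fd)

lemma pd_mult:
  fixes f g :: "pt \<Rightarrow> real"
  assumes "f differentiable (at x)" "g differentiable (at x)"
  shows "pd i (\<lambda>y. f y * g y) x = f x * pd i g x + pd i f x * g x"
  using pd_has[OF has_derivative_mult[OF fd_works[OF assms(1)] fd_works[OF assms(2)]]]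
  by (simp add: pd_eq_fd)

lemma pd_inv:
  fixes f :: "pt \<Rightarrow> real"
  assumes "f differentiable (at x)" "f x \<noteq> 0"
  shows "pd i (\<lambda>y. inverse (f y)) x = - (inverse (f x) * pd i f x * inverse (f x))"
  using pd_has[OF Deriv.has_derivative_inverse[OF assms(2) fd_works[OF assms(1)]]]
  by (simp add: pd_eq_fd)

lemma pd_const: "pd i (\<lambda>y. c) x = 0"
  using pd_has[OF has_derivative_const] by simp

lemma pd_coord: "pd i (\<lambda>y::pt. y $ j) x = (if i = j then 1 else 0)"
  using pd_has[OF bounded_linear_imp_has_derivative[OF bounded_linear_vec_nth]]
  by (simp add: axis_def)

definition C2 :: "pt set \<Rightarrow> (pt \<Rightarrow> real) \<Rightarrow> bool" where
  "C2 S f \<longleftrightarrow> (\<forall>y\<in>S. f differentiable (at y)) \<and> (\<forall>j. \<forall>y\<in>S. pd j f differentiable (at y))"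

lemma C2_D1: "C2 S f \<Longrightarrow> y \<in> S \<Longrightarrow> f differentiable (at y)"
  by (simp add: C2_def)
lemma C2_D2: "C2 S f \<Longrightarrow> y \<in> S \<Longrightarrow> pd j f differentiable (at y)"
  by (simp add: C2_def)

lemma C2_cong:
  assumes "open S" "C2 S f" "\<And>y. y \<in> S \<Longrightarrow> f y = g y"
  shows "C2 S g"
  unfolding C2_def
proof safe
  fix y assume y: "y \<in> S"
  show "g differentiable (at y)" by (rule diff_cong[OF assms(1) y assms(3) C2_D1[OF assms(2) y]])
  fix j
  show "pd j g differentiable (at y)"
    by (rule diff_cong[OF assms(1) y pd_cong_on[OF assms(1,3)] C2_D2[OF assms(2) y]])
qed

lemma C2_add:
  assumes "open S" "C2 S f" "C2 S g"
  shows "C2 S (\<lambda>y. f y + g y)"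
  unfolding C2_def
proof safe
  fix y assume y: "y \<in> S"
  show "(\<lambda>y. f y + g y) differentiable (at y)"
    using C2_D1[OF assms(2) y] C2_D1[OF assms(3) y] by simp
  fix j
  have e: "\<And>y. y \<in> S \<Longrightarrow> pd j f y + pd j g y = pd j (\<lambda>y. f y + g y) y"
    using pd_add C2_D1[OF assms(2)] C2_D1[OF assms(3)] by metis
  show "pd j (\<lambda>y. f y + g y) differentiable (at y)"
    by (rule diff_cong[OF assms(1) y e]) (use C2_D2[OF assms(2) y] C2_D2[OF assms(3) y] in \<open>auto intro!: derivative_intros\<close>)
qed

lemma C2_diff:
  assumes "open S" "C2 S f" "C2 S g"
  shows "C2 S (\<lambda>y. f y - g y)"
  unfolding C2_def
proof safe
  fix y assume y: "y \<in> S"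
  show "(\<lambda>y. f y - g y) differentiable (at y)"
    using C2_D1[OF assms(2) y] C2_D1[OF assms(3) y] by simp
  fix j
  have e: "\<And>y. y \<in> S \<Longrightarrow> pd j f y - pd j g y = pd j (\<lambda>y. f y - g y) y"
    using pd_diff C2_D1[OF assms(2)] C2_D1[OF assms(3)] by metis
  show "pd j (\<lambda>y. f y - g y) differentiable (at y)"
    by (rule diff_cong[OF assms(1) y e]) (use C2_D2[OF assms(2) y] C2_D2[OF assms(3) y] in \<open>auto intro!: derivative_intros\<close>)
qed

lemma C2_mult:
  assumes "open S" "C2 S f" "C2 S g"
  shows "C2 S (\<lambda>y. f y * g y)"
  unfolding C2_def
proof safe
  fix y assume y: "y \<in> S"
  show "(\<lambda>y. f y * g y) differentiable (at y)"
    using C2_D1[OF assms(2) y] C2_D1[OF assms(3) y] by simp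
  fix j
  have e: "\<And>y. y \<in> S \<Longrightarrow> f y * pd j g y + pd j f y * g y = pd j (\<lambda>y. f y * g y) y"
    using pd_mult C2_D1[OF assms(2)] C2_D1[OF assms(3)] by metis
  show "pd j (\<lambda>y. f y * g y) differentiable (at y)"
    by (rule diff_cong[OF assms(1) y e])
      (use C2_D1[OF assms(2) y] C2_D1[OF assms(3) y] C2_D2[OF assms(2) y] C2_D2[OF assms(3) y] in \<open>auto intro!: derivative_intros\<close>)
qed

lemma C2_inv:
  assumes "open S" "C2 S f" "\<And>y. y \<in> S \<Longrightarrow> f y \<noteq> 0"
  shows "C2 S (\<lambda>y. inverse (f y))"
  unfolding C2_def
proof safe
  fix y assume y: "y \<in> S"
  show "(\<lambda>y. inverse (f y)) differentiable (at y)"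
    using C2_D1[OF assms(2) y] assms(3)[OF y] by simp
  fix j
  have e: "\<And>y. y \<in> S \<Longrightarrow> - (inverse (f y) * pd j f y * inverse (f y)) = pd j (\<lambda>y. inverse (f y)) y"
    using pd_inv C2_D1[OF assms(2)] assms(3) by metis
  show "pd j (\<lambda>y. inverse (f y)) differentiable (at y)"
    by (rule diff_cong[OF assms(1) y e])
      (use C2_D1[OF assms(2) y] C2_D2[OF assms(2) y] assms(3)[OF y] in \<open>auto intro!: derivative_intros\<close>)
qed

lemma C2_const: "C2 S (\<lambda>y. c)"
  unfolding C2_def pd_const by simp

lemma C2_coord: "C2 S (\<lambda>y. y $ j)"
proof -
  have "pd i (\<lambda>y. y $ j) = (\<lambda>x. if i = j then 1 else 0)" for i
    by (simp add: fun_eq_iff pd_coord)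
  then show ?thesis unfolding C2_def
    using bounded_linear_imp_has_derivative[OF bounded_linear_vec_nth]
    by (auto simp: differentiable_def)
qed

lemma C2_smooth: "smooth_on UNIV F \<Longrightarrow> C2 S (iter_pd is F)"
  unfolding C2_def smooth_on_def
  using iter_pd.simps(2) differentiable_on_def
  by (metis UNIV_I at_within_open open_UNIV)

lemma sum_axis: "(\<Sum>k\<in>UNIV. axis i (1::real) $ k * c k) = c (i::2)"
  unfolding sum_2 axis_def using exhaust_2[of i] by auto

lemma line_deriv_axis:
  fixes f :: "pt \<Rightarrow> real"
  assumes "f differentiable (at (z + t *\<^sub>R axis i 1))"
  shows "((\<lambda>s. f (z + s *\<^sub>R axis i 1)) has_real_derivative pd i f (z + t *\<^sub>R axis i 1)) (at t)"
  using line_deriv[OF assms] by (simp add: sum_axis)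

lemma delta_mvt:
  fixes F :: "pt \<Rightarrow> real"
  assumes d1: "\<And>y. F differentiable (at y)" and d2: "\<And>k y. pd k F differentiable (at y)"
    and h: "h > 0"
  shows "\<exists>\<tau> \<sigma>. 0 < \<tau> \<and> \<tau> < h \<and> 0 < \<sigma> \<and> \<sigma> < h \<and>
    F (x + h *\<^sub>R axis i 1 + h *\<^sub>R axis j 1) - F (x + h *\<^sub>R axis i 1) - F (x + h *\<^sub>R axis j 1) + F x
    = h * h * pd j (pd i F) (x + \<tau> *\<^sub>R axis i 1 + \<sigma> *\<^sub>R axis j 1)"
proof -
  define ea where "ea = (axis i 1 :: pt)"
  define eb where "eb = (axis j 1 :: pt)"
  define \<alpha> where "\<alpha> t = F ((x + h *\<^sub>R eb) + t *\<^sub>R ea) - F (x + t *\<^sub>R ea)" for t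
  define \<alpha>' where "\<alpha>' t = pd i F ((x + h *\<^sub>R eb) + t *\<^sub>R ea) - pd i F (x + t *\<^sub>R ea)" for t
  have "(\<alpha> has_real_derivative \<alpha>' t) (at t)" for t
    unfolding \<alpha>_def \<alpha>'_def ea_def
    by (intro DERIV_diff line_deriv_axis d1)
  then obtain \<tau> where \<tau>: "0 < \<tau>" "\<tau> < h" "\<alpha> h - \<alpha> 0 = (h - 0) * \<alpha>' \<tau>"
    using MVT2[OF h, of \<alpha> \<alpha>'] by blast
  define \<beta> where "\<beta> s = pd i F ((x + \<tau> *\<^sub>R ea) + s *\<^sub>R eb)" for s
  define \<beta>' where "\<beta>' s = pd j (pd i F) ((x + \<tau> *\<^sub>R ea) + s *\<^sub>R eb)" for s
  have "(\<beta> has_real_derivative \<beta>' t) (at t)" for t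
    unfolding \<beta>_def \<beta>'_def eb_def
    by (intro line_deriv_axis d2)
  then obtain \<sigma> where \<sigma>: "0 < \<sigma>" "\<sigma> < h" "\<beta> h - \<beta> 0 = (h - 0) * \<beta>' \<sigma>"
    using MVT2[OF h, of \<beta> \<beta>'] by blast
  have "\<alpha>' \<tau> = \<beta> h - \<beta> 0"
    unfolding \<alpha>'_def \<beta>_def by (simp add: algebra_simps)
  then have "\<alpha> h - \<alpha> 0 = h * h * \<beta>' \<sigma>" using \<tau> \<sigma> by simp
  moreover have "\<alpha> h - \<alpha> 0 = F (x + h *\<^sub>R ea + h *\<^sub>R eb) - F (x + h *\<^sub>R ea) - F (x + h *\<^sub>R eb) + F x"
    unfolding \<alpha>_def by (simp add: algebra_simps)
  moreover have "\<beta>' \<sigma> = pd j (pd i F) (x + \<tau> *\<^sub>R ea + \<sigma> *\<^sub>R eb)"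
    unfolding \<beta>'_def by simp
  ultimately show ?thesis using \<tau> \<sigma> unfolding ea_def eb_def by metis
qed

lemma schwarz:
  fixes F :: "pt \<Rightarrow> real"
  assumes d1: "\<And>y. F differentiable (at y)" and d2: "\<And>k y. pd k F differentiable (at y)"
    and c1: "continuous_on UNIV (pd i (pd j F))" and c2: "continuous_on UNIV (pd j (pd i F))"
  shows "pd i (pd j F) x = pd j (pd i F) x"
proof (rule ccontr)
  assume ne: "pd i (pd j F) x \<noteq> pd j (pd i F) x"
  define d where "d = \<bar>pd i (pd j F) x - pd j (pd i F) x\<bar> / 2"
  have d: "d > 0" using ne by (simp add: d_def)
  obtain \<delta>1 where \<delta>1: "\<delta>1 > 0" "\<And>y. dist y x < \<delta>1 \<Longrightarrow> dist (pd i (pd j F) y) (pd i (pd j F) x) < d"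
    using c1 d unfolding continuous_on_iff by (metis UNIV_I)
  obtain \<delta>2 where \<delta>2: "\<delta>2 > 0" "\<And>y. dist y x < \<delta>2 \<Longrightarrow> dist (pd j (pd i F) y) (pd j (pd i F) x) < d"
    using c2 d unfolding continuous_on_iff by (metis UNIV_I)
  define h where "h = min \<delta>1 \<delta>2 / 4"
  have h: "h > 0" "2 * h < \<delta>1" "2 * h < \<delta>2" using \<delta>1 \<delta>2 by (auto simp: h_def)
  obtain \<tau> \<sigma> where ts: "0 < \<tau>" "\<tau> < h" "0 < \<sigma>" "\<sigma> < h"
    "F (x + h *\<^sub>R axis i 1 + h *\<^sub>R axis j 1) - F (x + h *\<^sub>R axis i 1) - F (x + h *\<^sub>R axis j 1) + F x
    = h * h * pd j (pd i F) (x + \<tau> *\<^sub>R axis i 1 + \<sigma> *\<^sub>R axis j 1)"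
    using delta_mvt[OF d1 d2 h(1), of x i j] by blast
  obtain \<tau>' \<sigma>' where ts': "0 < \<tau>'" "\<tau>' < h" "0 < \<sigma>'" "\<sigma>' < h"
    "F (x + h *\<^sub>R axis j 1 + h *\<^sub>R axis i 1) - F (x + h *\<^sub>R axis j 1) - F (x + h *\<^sub>R axis i 1) + F x
    = h * h * pd i (pd j F) (x + \<tau>' *\<^sub>R axis j 1 + \<sigma>' *\<^sub>R axis i 1)"
    using delta_mvt[OF d1 d2 h(1), of x j i] by blast
  have "x + h *\<^sub>R axis j 1 + h *\<^sub>R axis i 1 = x + h *\<^sub>R axis i 1 + h *\<^sub>R axis j 1"
    by (simp add: algebra_simps)
  then have eq: "pd j (pd i F) (x + \<tau> *\<^sub>R axis i 1 + \<sigma> *\<^sub>R axis j 1) =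
      pd i (pd j F) (x + \<tau>' *\<^sub>R axis j 1 + \<sigma>' *\<^sub>R axis i 1)"
    using ts(5) ts'(5) h(1) by (simp add: algebra_simps)
  have nb: "dist (x + a *\<^sub>R axis k 1 + b *\<^sub>R axis l 1) x < 2 * h" if "0 < a" "a < h" "0 < b" "b < h" for a b k l
  proof -
    have "dist (x + a *\<^sub>R axis k 1 + b *\<^sub>R axis l 1) x = norm (a *\<^sub>R axis k (1::real) + b *\<^sub>R axis l 1)"
      by (simp add: dist_norm)
    also have "\<dots> \<le> norm (a *\<^sub>R axis k (1::real)) + norm (b *\<^sub>R axis l (1::real))" by (rule norm_triangle_ineq)
    also have "\<dots> = a + b" using that by simp
    finally show ?thesis using that by simp
  qed
  have A: "dist (pd j (pd i F) (x + \<tau> *\<^sub>R axis i 1 + \<sigma> *\<^sub>R axis j 1)) (pd j (pd i F) x) < d"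
    by (rule \<delta>2(2)) (use nb[OF ts(1-4), of i j] h in linarith)
  have B: "dist (pd i (pd j F) (x + \<tau>' *\<^sub>R axis j 1 + \<sigma>' *\<^sub>R axis i 1)) (pd i (pd j F) x) < d"
    by (rule \<delta>1(2)) (use nb[OF ts'(1-4), of j i] h in linarith)
  from A B eq have "\<bar>pd i (pd j F) x - pd j (pd i F) x\<bar> < 2 * d"
    by (simp add: dist_real_def)
  then show False by (simp add: d_def)
qed




definition madj :: "real^2^2 \<Rightarrow> real^2^2" where
  "madj H = (\<chi> i j. if i = 1 then (if j = 1 then H$2$2 else - H$1$2)
                     else (if j = 1 then - H$2$1 else H$1$1))"

lemma two_ne: "(i::2) \<noteq> 1 \<Longrightarrow> i = 2" using exhaust_2[of i] by auto

lemma inv2: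
  fixes H :: "real^2^2"
  assumes "det H \<noteq> 0"
  shows "det H *\<^sub>R matrix_inv H = madj H"
proof -
  define M where "M = (inverse (det H)) *\<^sub>R madj H"
  have one: "(1::2) \<noteq> 2" by simp
  have HM0: "H ** madj H = det H *\<^sub>R mat 1" and MH0: "madj H ** H = det H *\<^sub>R mat 1"
    using one
    by (auto simp: madj_def vec_eq_iff forall_2 matrix_matrix_mult_def sum_2 mat_def det_2 algebra_simps)
  have HM: "H ** M = mat 1" unfolding M_def matrix_scalar_ac scalar_matrix_assoc[symmetric] HM0
    using assms by simp
  have MH: "M ** H = mat 1" unfolding M_def scalar_matrix_assoc[symmetric] MH0
    using assms by simp
  have "H ** matrix_inv H = mat 1 \<and> matrix_inv H ** H = mat 1"
    unfolding matrix_inv_def by (rule someI[of _ M]) (use HM MH in simp)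
  then have "matrix_inv H = M"
    by (metis HM MH matrix_mul_assoc matrix_mul_lid matrix_mul_rid)
  then show ?thesis using assms by (simp add: M_def)
qed

lemma qf_expand:
  fixes H :: "real^2^2" and \<xi> :: pt
  shows "\<xi> \<bullet> (H *v \<xi>) = H$1$1 * (\<xi>$1)^2 + (H$1$2 + H$2$1) * (\<xi>$1 * \<xi>$2) + H$2$2 * (\<xi>$2)^2"
  by (simp add: inner_vec_def matrix_vector_mult_def sum_2 algebra_simps power2_eq_square)

lemma norm2_expand: "(norm (\<xi>::pt))^2 = (\<xi>$1)^2 + (\<xi>$2)^2"
  unfolding power2_norm_eq_inner by (simp add: inner_vec_def sum_2 power2_eq_square)

lemma vec2_ex: "\<exists>\<xi>::pt. \<xi>$1 = x \<and> \<xi>$2 = y"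
  by (rule exI[of _ "\<chi> i. if i = 1 then x else y"]) simp

lemma quad_disc:
  fixes a b c :: real
  assumes "\<And>x y. a * x^2 + b * (x * y) + c * y^2 \<ge> 0"
  shows "a \<ge> 0" "c \<ge> 0" "b^2 \<le> 4 * a * c"
proof -
  show a: "a \<ge> 0" using assms[of 1 0] by simp
  show c: "c \<ge> 0" using assms[of 0 1] by simp
  show "b^2 \<le> 4 * a * c"
  proof (cases "a = 0")
    case True
    show ?thesis
    proof (rule ccontr)
      assume "\<not> ?thesis"
      then have b: "b \<noteq> 0" using True by auto
      have "a * (- (c + 1) / b)^2 + b * ((- (c + 1) / b) * 1) + c * 1^2 \<ge> 0" by (rule assms)
      then show False using True b by (simp add: field_simps)
    qed
  next
    case False
    then have ap: "a > 0" using a by simp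
    have "a * (-b)^2 + b * ((-b) * (2*a)) + c * (2*a)^2 \<ge> 0" by (rule assms)
    then have "a * (4 * a * c - b^2) \<ge> 0" by (simp add: algebra_simps power2_eq_square)
    then show ?thesis using ap by (simp add: zero_le_mult_iff)
  qed
qed

lemma form_ge:
  fixes H :: "real^2^2"
  assumes "\<And>\<xi>::pt. \<xi> \<bullet> (H *v \<xi>) \<ge> s * (norm \<xi>)^2"
  shows "H$1$1 - s \<ge> 0" "H$2$2 - s \<ge> 0" "(H$1$2 + H$2$1)^2 \<le> 4 * (H$1$1 - s) * (H$2$2 - s)"
proof -
  have "(H$1$1 - s) * x^2 + (H$1$2 + H$2$1) * (x * y) + (H$2$2 - s) * y^2 \<ge> 0" for x y
  proof -
    obtain \<xi> :: pt where "\<xi>$1 = x" "\<xi>$2 = y" using vec2_ex by blast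
    then show ?thesis using assms[of \<xi>] by (simp add: qf_expand norm2_expand algebra_simps)
  qed
  then show "H$1$1 - s \<ge> 0" "H$2$2 - s \<ge> 0" "(H$1$2 + H$2$1)^2 \<le> 4 * (H$1$1 - s) * (H$2$2 - s)"
    using quad_disc by blast+
qed

lemma det_ge:
  fixes H :: "real^2^2"
  assumes "\<And>\<xi>::pt. \<xi> \<bullet> (H *v \<xi>) \<ge> s * (norm \<xi>)^2" "s \<ge> 0"
  shows "det H \<ge> s^2"
proof -
  note f = form_ge[OF assms(1)]
  define a where "a = H$1$1" define b where "b = H$1$2" define c where "c = H$2$1" define d where "d = H$2$2"
  have 1: "a - s \<ge> 0" "d - s \<ge> 0" "(b + c)^2 \<le> 4 * (a - s) * (d - s)" using f by (auto simp: a_def b_def c_def d_def)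
  have 2: "4 * (b * c) \<le> (b + c)^2" using sum_squares_ge_zero[of "b - c" 0]
    by (simp add: power2_eq_square algebra_simps)
  have "s * (a - s) \<ge> 0" "s * (d - s) \<ge> 0" using 1 assms(2) by simp_all
  then have 3: "s * (a + d) - s^2 \<ge> s^2" by (simp add: power2_eq_square algebra_simps)
  have "4 * (a * d - b * c) \<ge> 4 * s^2"
    using 1(3) 2 3 by (simp add: algebra_simps power2_eq_square)
  then show ?thesis by (simp add: det_2 a_def b_def c_def d_def)
qed

lemma trace_nonneg:
  fixes a b d p11 p12 p21 p22 :: real
  assumes "a \<ge> 0" "d \<ge> 0" "(2*b)^2 \<le> 4 * a * d"
    "p11 \<ge> 0" "p22 \<ge> 0" "(p12 + p21)^2 \<le> 4 * p11 * p22"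
  shows "d * p11 - b * p12 - b * p21 + a * p22 \<ge> 0"
proof -
  define \<beta> where "\<beta> = p12 + p21"
  have bb: "b^2 \<le> a * d" using assms(3) by (simp add: power2_eq_square)
  have pp: "\<beta>^2 \<le> 4 * (p11 * p22)" using assms(6) by (simp add: \<beta>_def mult.assoc)
  have "b^2 * \<beta>^2 \<le> (a * d) * (4 * (p11 * p22))"
    by (rule mult_mono[OF bb pp]) (use assms in auto)
  also have "\<dots> \<le> (d * p11 + a * p22)^2"
    using sum_squares_ge_zero[of "d*p11 - a*p22" 0] by (simp add: power2_eq_square algebra_simps)
  finally have "(b * \<beta>)^2 \<le> (d * p11 + a * p22)^2" by (simp add: power_mult_distrib)
  moreover have "d * p11 + a * p22 \<ge> 0" using assms by simp
  ultimately have "b * \<beta> \<le> d * p11 + a * p22"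
    using abs_le_square_iff[of "b*\<beta>" "d * p11 + a * p22"] by simp
  then show ?thesis by (simp add: \<beta>_def algebra_simps)
qed

lemma max_second_1d:
  fixes g g' :: "real \<Rightarrow> real"
  assumes "\<delta> > 0" "\<And>s. \<bar>s\<bar> < \<delta> \<Longrightarrow> (g has_real_derivative g' s) (at s)"
    "(g' has_real_derivative G) (at 0)" "\<And>s. \<bar>s\<bar> < \<delta> \<Longrightarrow> g s \<le> g 0"
  shows "G \<le> 0"
proof -
  have "- G \<ge> 0"
    by (rule min_second_1d[of \<delta> "\<lambda>s. - g s" "\<lambda>s. - g' s"])
       (use assms in \<open>auto intro!: derivative_eq_intros\<close>)
  then show ?thesis by simp
qed

lemma max_hess:
  assumes "open S" "z \<in> S" "\<And>y. y \<in> S \<Longrightarrow> f differentiable (at y)"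
    "\<And>j. pd j f differentiable (at z)" "\<And>y. y \<in> S \<Longrightarrow> f y \<le> f z"
  shows "quadf f z \<xi> \<le> 0"
proof -
  obtain e where e: "e > 0" "ball z e \<subseteq> S" using assms(1,2) open_contains_ball by blast
  define \<delta> where "\<delta> = e / (norm \<xi> + 1)"
  have np: "norm \<xi> + 1 > 0" using norm_ge_zero[of \<xi>] by linarith
  have \<delta>: "\<delta> > 0" using e np by (simp add: \<delta>_def)
  have inS: "z + s *\<^sub>R \<xi> \<in> S" if "\<bar>s\<bar> < \<delta>" for s
  proof -
    have "norm (s *\<^sub>R \<xi>) = \<bar>s\<bar> * norm \<xi>" by simp
    also have "\<dots> \<le> \<bar>s\<bar> * (norm \<xi> + 1)" by (simp add: mult_left_mono)
    also have "\<dots> < \<delta> * (norm \<xi> + 1)" using that np by simp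
    also have "\<dots> = e" using np by (simp add: \<delta>_def)
    finally show ?thesis using e(2) by (auto simp: dist_norm)
  qed
  show ?thesis
  proof (rule max_second_1d[OF \<delta>])
    fix s :: real assume "\<bar>s\<bar> < \<delta>"
    then show "((\<lambda>s. f (z + s *\<^sub>R \<xi>)) has_real_derivative
       (\<lambda>s. \<Sum>j\<in>UNIV. \<xi>$j * pd j f (z + s *\<^sub>R \<xi>)) s) (at s)"
      using line_deriv[of f z s \<xi>] assms(3) inS by simp
  next
    fix s :: real assume "\<bar>s\<bar> < \<delta>"
    then show "(\<lambda>s. f (z + s *\<^sub>R \<xi>)) s \<le> (\<lambda>s. f (z + s *\<^sub>R \<xi>)) 0"
      using assms(5) inS by simp
  next
    have "((\<lambda>s. pd j f (z + s *\<^sub>R \<xi>)) has_real_derivative (\<Sum>i\<in>UNIV. \<xi>$i * pd i (pd j f) z)) (at 0)" for j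
      using line_deriv[of "pd j f" z 0 \<xi>] assms(4) by simp
    then have "((\<lambda>s. \<Sum>j\<in>UNIV. \<xi>$j * pd j f (z + s *\<^sub>R \<xi>)) has_real_derivative
        (\<Sum>j\<in>UNIV. \<xi>$j * (\<Sum>i\<in>UNIV. \<xi>$i * pd i (pd j f) z))) (at 0)"
      by (auto intro!: derivative_eq_intros simp: mult.commute)
    moreover have "(\<Sum>j\<in>UNIV. \<xi>$j * (\<Sum>i\<in>UNIV. \<xi>$i * pd i (pd j f) z)) = quadf f z \<xi>"
      unfolding quadf_def by (simp add: sum_2 algebra_simps)
    ultimately show "((\<lambda>s. \<Sum>j\<in>UNIV. \<xi>$j * pd j f (z + s *\<^sub>R \<xi>)) has_real_derivative quadf f z \<xi>) (at 0)"
      by simp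
  qed
qed

lemma quadf_hess: "quadf f z \<xi> = \<xi> \<bullet> (hess f z *v \<xi>)"
  unfolding quadf_def hess_def
  by (simp add: inner_vec_def matrix_vector_mult_def sum_2 algebra_simps)

lemma quadf_mat: "quadf f z \<xi> = \<xi> \<bullet> ((\<chi> i j. pd i (pd j f) z) *v \<xi>)"
  unfolding quadf_def
  by (simp add: inner_vec_def matrix_vector_mult_def sum_2 algebra_simps)

lemma pd2_lin:
  assumes "open S" "C2 S f" "C2 S g" "z \<in> S"
  shows "pd i (pd j (\<lambda>y. f y + c * g y)) z = pd i (pd j f) z + c * pd i (pd j g) z"
proof -
  have e: "pd j (\<lambda>y. f y + c * g y) y = pd j f y + c * pd j g y" if "y \<in> S" for y
  proof -
    have "pd j (\<lambda>y. f y + c * g y) y = pd j f y + pd j (\<lambda>y. c * g y) y"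
      by (rule pd_add) (use C2_D1[OF assms(2) that] C2_D1[OF assms(3) that] in auto)
    also have "pd j (\<lambda>y. c * g y) y = c * pd j g y + pd j (\<lambda>y. c) y * g y"
      by (rule pd_mult) (use C2_D1[OF assms(3) that] in auto)
    finally show ?thesis by (simp add: pd_const)
  qed
  have "pd i (pd j (\<lambda>y. f y + c * g y)) z = pd i (\<lambda>y. pd j f y + c * pd j g y) z"
    by (rule pd_cong[OF assms(1,4) e])
  also have "\<dots> = pd i (pd j f) z + pd i (\<lambda>y. c * pd j g y) z"
    by (rule pd_add) (use C2_D2[OF assms(2,4)] C2_D2[OF assms(3,4)] in auto)
  also have "pd i (\<lambda>y. c * pd j g y) z = c * pd i (pd j g) z + pd i (\<lambda>y. c) z * pd j g z"
    by (rule pd_mult) (use C2_D2[OF assms(3,4)] in auto)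
  finally show ?thesis by (simp add: pd_const)
qed

lemma pd2_diff:
  assumes "open S" "C2 S f" "C2 S g" "z \<in> S"
  shows "pd i (pd j (\<lambda>y. f y - g y)) z = pd i (pd j f) z - pd i (pd j g) z"
  using pd2_lin[OF assms(1-3,4), of i j "-1"] by simp

definition q2 :: "pt \<Rightarrow> real" where "q2 y = y$1 * y$1 + y$2 * y$2"

lemma C2_q2: "C2 S q2"
proof -
  have "C2 UNIV (\<lambda>y::pt. y$1 * y$1 + y$2 * y$2)"
    by (intro C2_add C2_mult C2_coord open_UNIV)
  then show ?thesis unfolding C2_def q2_def by auto
qed

lemma pd_q2: "pd j q2 = (\<lambda>y. 2 * y$j)"
proof
  fix y :: pt
  have d: "(\<lambda>y::pt. y$k) differentiable (at y)" for k
    using C2_D1[OF C2_coord] by blast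
  have "pd j q2 y = pd j (\<lambda>y::pt. y$1 * y$1) y + pd j (\<lambda>y::pt. y$2 * y$2) y"
    unfolding q2_def by (rule pd_add) (use d in auto)
  also have "\<dots> = 2 * y$j"
    using exhaust_2[of j] by (auto simp: pd_mult d pd_coord)
  finally show "pd j q2 y = 2 * y$j" .
qed

lemma pd2_q2: "pd i (pd j q2) y = (if i = j then 2 else 0)"
proof -
  have "pd i (\<lambda>y::pt. 2 * y$j) y = 2 * pd i (\<lambda>y::pt. y$j) y + pd i (\<lambda>y. 2) y * y$j"
    by (rule pd_mult) (use C2_D1[OF C2_coord] in auto)
  then show ?thesis by (simp add: pd_q2 pd_coord pd_const)
qed

lemma form_nonneg:
  fixes H :: "real^2^2"
  assumes "\<And>\<xi>::pt. \<xi> \<bullet> (H *v \<xi>) \<ge> 0"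
  shows "g \<bullet> (H *v g) \<le> (norm g)^2 * (H$1$1 + H$2$2)"
proof -
  have a0: "\<And>\<xi>::pt. \<xi> \<bullet> (H *v \<xi>) \<ge> 0 * (norm \<xi>)^2" using assms by simp
  note f = form_ge[OF a0]
  define a where "a = H$1$1" define \<beta> where "\<beta> = H$1$2 + H$2$1" define d where "d = H$2$2"
  define x where "x = g$1" define y where "y = g$2"
  have 1: "a \<ge> 0" "d \<ge> 0" "\<beta>^2 \<le> 4 * a * d" using f by (auto simp: a_def \<beta>_def d_def)
  have key: "a * y^2 - \<beta> * (x * y) + d * x^2 \<ge> 0"
  proof (cases "a = 0")
    case True
    then have "\<beta> = 0" using 1 by simp
    then show ?thesis using True 1 by simp
  next
    case False
    then have ap: "a > 0" using 1 by simp
    have "4 * a * (a * y^2 - \<beta> * (x * y) + d * x^2) = (2*a*y - \<beta>*x)^2 + (4*a*d - \<beta>^2) * x^2"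
      by (simp add: power2_eq_square algebra_simps)
    also have "\<dots> \<ge> 0" using 1 by simp
    finally show ?thesis using ap by (simp add: zero_le_mult_iff)
  qed
  have "g \<bullet> (H *v g) = a * x^2 + \<beta> * (x * y) + d * y^2"
    by (simp add: qf_expand a_def \<beta>_def d_def x_def y_def)
  moreover have "(norm g)^2 * (H$1$1 + H$2$2) = (x^2 + y^2) * (a + d)"
    by (simp add: norm2_expand x_def y_def a_def d_def)
  ultimately show ?thesis using key by (simp add: algebra_simps)
qed

lemma sum_qf: "(\<Sum>i\<in>UNIV. \<Sum>j\<in>UNIV. (g::pt) $ i * g $ j * H i j) = g \<bullet> ((\<chi> i j. H i j) *v g)"
  by (simp add: inner_vec_def matrix_vector_mult_def sum_2 algebra_simps)

lemma cpos_lb: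
  fixes g :: "pt \<Rightarrow> real"
  assumes "compact K" "continuous_on K g" "\<And>y. y \<in> K \<Longrightarrow> g y > 0"
  shows "\<exists>m>0. \<forall>y\<in>K. m \<le> g y"
proof (cases "K = {}")
  case True then show ?thesis by (intro exI[of _ 1]) auto
next
  case False
  obtain z where "z \<in> K" "\<forall>y\<in>K. g z \<le> g y" using continuous_attains_inf[OF assms(1) False assms(2)] by blast
  then show ?thesis using assms(3) by blast
qed

lemma cbd:
  fixes g :: "pt \<Rightarrow> real"
  assumes "compact K" "continuous_on K g"
  shows "\<exists>B\<ge>0. \<forall>y\<in>K. \<bar>g y\<bar> \<le> B"
proof (cases "K = {}")
  case True then show ?thesis by (intro exI[of _ 0]) auto
next
  case False
  have "continuous_on K (\<lambda>y. \<bar>g y\<bar>)" using assms(2) by (intro continuous_intros)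
  then obtain z where "z \<in> K" "\<forall>y\<in>K. \<bar>g y\<bar> \<le> \<bar>g z\<bar>"
    using continuous_attains_sup[OF assms(1) False] by blast
  then show ?thesis by (intro exI[of _ "\<bar>g z\<bar>"]) auto
qed

lemma smooth_D:
  assumes "smooth_on UNIV F"
  shows "iter_pd is F differentiable (at y)"
proof -
  have "iter_pd is F differentiable_on UNIV" using assms unfolding smooth_on_def by blast
  then show ?thesis unfolding differentiable_on_def by simp
qed

lemma smooth_C:
  assumes "smooth_on UNIV F"
  shows "continuous_on UNIV (iter_pd is F)"
proof -
  have "iter_pd is F differentiable_on UNIV" using assms unfolding smooth_on_def by blast
  then show ?thesis by (rule differentiable_imp_continuous_on)
qed

lemma smooth_facts:
  assumes "smooth_on UNIV F"
  shows "\<And>y. F differentiable (at y)" "\<And>j y. pd j F differentiable (at y)"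
    "\<And>i j y. pd i (pd j F) differentiable (at y)"
    "\<And>i j. continuous_on UNIV (pd i (pd j F))"
    "\<And>j. continuous_on UNIV (pd j F)" "continuous_on UNIV F"
    "\<And>S. C2 S F" "\<And>S i j. C2 S (pd i (pd j F))"
proof -
  fix y i j S
  show "F differentiable (at y)" using smooth_D[OF assms, of "[]"] by simp
  show "pd j F differentiable (at y)" using smooth_D[OF assms, of "[j]"] by simp
  show "pd i (pd j F) differentiable (at y)" using smooth_D[OF assms, of "[i,j]"] by simp
  show "continuous_on UNIV (pd i (pd j F))" using smooth_C[OF assms, of "[i,j]"] by simp
  show "continuous_on UNIV (pd j F)" using smooth_C[OF assms, of "[j]"] by simp
  show "continuous_on UNIV F" using smooth_C[OF assms, of "[]"] by simp
  show "C2 S F" using C2_smooth[OF assms, of _ "[]"] by simp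
  show "C2 S (pd i (pd j F))" using C2_smooth[OF assms, of _ "[i,j]"] by simp
qed



definition dH :: "(pt \<Rightarrow> real) \<Rightarrow> pt \<Rightarrow> real" where
  "dH F y = det (hess F y)"

lemma dH_eq: "dH F = (\<lambda>y. pd 1 (pd 1 F) y * pd 2 (pd 2 F) y - pd 1 (pd 2 F) y * pd 2 (pd 1 F) y)"
  by (simp add: fun_eq_iff dH_def det_2 hess_def)

locale sol =
  fixes \<Omega> :: "pt set" and u w F :: "pt \<Rightarrow> real" and cu :: real
  assumes op: "open \<Omega>"
    and F: "smooth_on UNIV F" and uF: "\<And>x. x \<in> closure \<Omega> \<Longrightarrow> F x = u x"
    and cu: "cu > 0" and posu: "\<And>x \<xi>. x \<in> \<Omega> \<Longrightarrow> \<xi> \<bullet> (hess u x *v \<xi>) \<ge> cu * (norm \<xi>)^2"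
    and wdef: "\<And>x. x \<in> \<Omega> \<Longrightarrow> w x = 1 / det (hess u x)"
    and pde: "\<forall>x\<in>\<Omega>. (let U = det (hess u x) *\<^sub>R matrix_inv (hess u x) in
         (\<Sum>i\<in>UNIV. \<Sum>j\<in>UNIV. U $ i $ j * pd i (pd j w) x))
        = - (norm (grad u x))\<^sup>2 * lap u x
          - 2 * (\<Sum>i\<in>UNIV. \<Sum>j\<in>UNIV. grad u x $ i * grad u x $ j * pd i (pd j u) x)"
begin

lemma uF_on: "y \<in> \<Omega> \<Longrightarrow> u y = F y"
  using uF closure_subset by (metis subsetD)

lemma pd1_uF: "x \<in> \<Omega> \<Longrightarrow> pd j u x = pd j F x"
  by (rule pd_cong[OF op _ uF_on])

lemma pd2_uF: "x \<in> \<Omega> \<Longrightarrow> pd i (pd j u) x = pd i (pd j F) x"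
  by (rule pd_cong[OF op _ pd1_uF])

lemma hess_uF: "x \<in> \<Omega> \<Longrightarrow> hess u x = hess F x"
  by (simp add: hess_def pd2_uF)

lemma grad_uF: "x \<in> \<Omega> \<Longrightarrow> grad u x = grad F x"
  by (simp add: grad_def pd1_uF)

lemma symF: "pd 1 (pd 2 F) x = pd 2 (pd 1 F) x"
  by (rule schwarz) (use smooth_facts[OF F] in auto)

lemma posF: "x \<in> \<Omega> \<Longrightarrow> \<xi> \<bullet> (hess F x *v \<xi>) \<ge> cu * (norm \<xi>)^2"
  using posu hess_uF by metis

lemma posF0: "x \<in> \<Omega> \<Longrightarrow> \<xi> \<bullet> (hess F x *v \<xi>) \<ge> 0 * (norm \<xi>)^2"
  using posF[of x \<xi>] cu by (metis mult_nonneg_nonneg order_trans less_imp_le zero_le_power2 mult_zero_left)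

lemma diag_pos: "x \<in> \<Omega> \<Longrightarrow> pd 1 (pd 1 F) x \<ge> cu \<and> pd 2 (pd 2 F) x \<ge> cu"
  using form_ge[OF posF, of x] by (simp add: hess_def)

lemma disc_F: "x \<in> \<Omega> \<Longrightarrow> (2 * pd 1 (pd 2 F) x)^2 \<le> 4 * pd 1 (pd 1 F) x * pd 2 (pd 2 F) x"
  using form_ge(3)[OF posF0, of x] by (simp add: hess_def symF)

lemma det_pos: "x \<in> \<Omega> \<Longrightarrow> dH F x \<ge> cu^2"
  unfolding dH_def by (rule det_ge[OF posF]) (use cu in auto)

lemma C2_dH0: "C2 UNIV (dH F)"
  unfolding dH_eq by (intro C2_diff C2_mult smooth_facts[OF F] open_UNIV)

lemma C2_dH: "C2 S (dH F)"
  using C2_dH0 unfolding C2_def by auto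

definition W0 where "W0 y = inverse (dH F y)"

lemma C2_W0: "C2 \<Omega> W0"
proof -
  have "C2 \<Omega> (\<lambda>y. inverse (dH F y))"
    by (rule C2_inv[OF op C2_dH]) (use det_pos cu in \<open>fastforce\<close>)
  then show ?thesis unfolding W0_def[abs_def] .
qed

lemma w_W0: "x \<in> \<Omega> \<Longrightarrow> w x = W0 x"
  by (simp add: wdef W0_def dH_def hess_uF divide_inverse)

lemma pd2_w: "x \<in> \<Omega> \<Longrightarrow> pd i (pd j w) x = pd i (pd j W0) x"
  by (rule pd_cong[OF op _ pd_cong_on[OF op w_W0]])

definition rhs where
  "rhs x = - (norm (grad F x))\<^sup>2 * (pd 1 (pd 1 F) x + pd 2 (pd 2 F) x)
           - 2 * (grad F x \<bullet> (hess F x *v grad F x))"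

lemma pde_F:
  assumes x: "x \<in> \<Omega>"
  shows "pd 2 (pd 2 F) x * pd 1 (pd 1 W0) x - pd 1 (pd 2 F) x * pd 1 (pd 2 W0) x
       - pd 1 (pd 2 F) x * pd 2 (pd 1 W0) x + pd 1 (pd 1 F) x * pd 2 (pd 2 W0) x = rhs x"
proof -
  have "cu^2 > 0" using cu by simp
  moreover have "det (hess F x) \<ge> cu^2" using det_pos[OF x] by (simp add: dH_def)
  ultimately have "det (hess F x) > 0" by linarith
  then have dn: "det (hess u x) \<noteq> 0" by (simp add: hess_uF[OF x])
  have U: "det (hess u x) *\<^sub>R matrix_inv (hess u x) = madj (hess F x)"
    using inv2[OF dn] hess_uF[OF x] by simp
  have e: "(\<Sum>i\<in>UNIV. \<Sum>j\<in>UNIV. grad F x $ i * grad F x $ j * pd i (pd j u) x)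
      = grad F x \<bullet> (hess F x *v grad F x)"
    using sum_qf[of "grad F x" "\<lambda>i j. pd i (pd j F) x"] x
    by (simp add: grad_uF pd2_uF hess_def)
  have l: "lap u x = pd 1 (pd 1 F) x + pd 2 (pd 2 F) x"
    using x by (simp add: lap_def sum_2 pd2_uF)
  have "(\<Sum>i\<in>UNIV. \<Sum>j\<in>UNIV. madj (hess F x) $ i $ j * pd i (pd j w) x) = rhs x"
  proof -
    have p: "(\<Sum>i\<in>UNIV. \<Sum>j\<in>UNIV. (det (hess u x) *\<^sub>R matrix_inv (hess u x)) $ i $ j * pd i (pd j w) x)
        = - (norm (grad u x))\<^sup>2 * lap u x
          - 2 * (\<Sum>i\<in>UNIV. \<Sum>j\<in>UNIV. grad u x $ i * grad u x $ j * pd i (pd j u) x)"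
      using pde x unfolding Let_def by blast
    show ?thesis using p unfolding U l grad_uF[OF x] by (simp add: e rhs_def)
  qed
  then show ?thesis
    using x by (simp add: sum_2 madj_def hess_def pd2_w symF algebra_simps)
qed

lemma rhs_bounds:
  assumes x: "x \<in> \<Omega>"
  shows "rhs x \<le> 0" "rhs x \<ge> - 3 * (norm (grad F x))^2 * (pd 1 (pd 1 F) x + pd 2 (pd 2 F) x)"
proof -
  define g where "g = grad F x"
  have G0: "g \<bullet> (hess F x *v g) \<ge> 0" using posF0[OF x, of g] by simp
  have G1: "g \<bullet> (hess F x *v g) \<le> (norm g)^2 * (pd 1 (pd 1 F) x + pd 2 (pd 2 F) x)"
    using form_nonneg[of "hess F x" g] posF0[OF x] by (simp add: hess_def)
  have tr: "pd 1 (pd 1 F) x + pd 2 (pd 2 F) x \<ge> 0" using diag_pos[OF x] cu by simp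
  show "rhs x \<le> 0" unfolding rhs_def g_def[symmetric] using G0 mult_nonneg_nonneg[OF zero_le_power2[of "norm g"] tr] by simp
  show "rhs x \<ge> - 3 * (norm (grad F x))^2 * (pd 1 (pd 1 F) x + pd 2 (pd 2 F) x)"
    unfolding rhs_def g_def[symmetric] using G1 by simp
qed

lemma C2_Z: "C2 \<Omega> (\<lambda>y. W0 y + c * q2 y)"
  by (intro C2_add C2_mult C2_const C2_W0 C2_q2 op)

lemma P_Z:
  assumes "z \<in> \<Omega>"
  shows "pd i (pd j (\<lambda>y. W0 y + c * q2 y)) z = pd i (pd j W0) z + c * (if i = j then 2 else 0)"
  using pd2_lin[OF op C2_W0 C2_q2 assms] by (simp add: pd2_q2)

lemma mp_min:
  assumes z: "z \<in> \<Omega>" and mn: "\<And>y. y \<in> \<Omega> \<Longrightarrow> W0 z + c * q2 z \<le> W0 y + c * q2 y"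
  shows "rhs z + 2 * c * (pd 1 (pd 1 F) z + pd 2 (pd 2 F) z) \<ge> 0"
proof -
  define Z where "Z = (\<lambda>y. W0 y + c * q2 y)"
  have "quadf Z z \<xi> \<ge> 0" for \<xi>
    unfolding Z_def
    by (rule min_hess[OF op z]) (use C2_D1[OF C2_Z] C2_D2[OF C2_Z z] mn in auto)
  then have "\<xi> \<bullet> ((\<chi> i j. pd i (pd j Z) z) *v \<xi>) \<ge> 0 * (norm \<xi>)^2" for \<xi>
    unfolding quadf_mat by simp
  note P = form_ge[OF this]
  have "pd 2 (pd 2 F) z * pd 1 (pd 1 Z) z - pd 1 (pd 2 F) z * pd 1 (pd 2 Z) z
       - pd 1 (pd 2 F) z * pd 2 (pd 1 Z) z + pd 1 (pd 1 F) z * pd 2 (pd 2 Z) z \<ge> 0"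
    by (rule trace_nonneg) (use P diag_pos[OF z] cu disc_F[OF z] in auto)
  then show ?thesis using pde_F[OF z] unfolding Z_def P_Z[OF z]
    by (simp add: algebra_simps)
qed

lemma mp_max:
  assumes z: "z \<in> \<Omega>" and mx: "\<And>y. y \<in> \<Omega> \<Longrightarrow> W0 y + c * q2 y \<le> W0 z + c * q2 z"
  shows "rhs z + 2 * c * (pd 1 (pd 1 F) z + pd 2 (pd 2 F) z) \<le> 0"
proof -
  define Z where "Z = (\<lambda>y. W0 y + c * q2 y)"
  have "quadf Z z \<xi> \<le> 0" for \<xi>
    unfolding Z_def
    by (rule max_hess[OF op z]) (use C2_D1[OF C2_Z] C2_D2[OF C2_Z z] mx in auto)
  moreover have "\<xi> \<bullet> ((\<chi> i j. - pd i (pd j Z) z) *v \<xi>) = - quadf Z z \<xi>" for \<xi>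
    by (simp add: quadf_def inner_vec_def matrix_vector_mult_def sum_2 algebra_simps)
  ultimately have "\<xi> \<bullet> ((\<chi> i j. - pd i (pd j Z) z) *v \<xi>) \<ge> 0 * (norm \<xi>)^2" for \<xi>
    by simp
  note P = form_ge[OF this]
  have "pd 2 (pd 2 F) z * (- pd 1 (pd 1 Z) z) - pd 1 (pd 2 F) z * (- pd 1 (pd 2 Z) z)
       - pd 1 (pd 2 F) z * (- pd 2 (pd 1 Z) z) + pd 1 (pd 1 F) z * (- pd 2 (pd 2 Z) z) \<ge> 0"
    by (rule trace_nonneg) (use P diag_pos[OF z] cu disc_F[OF z] in auto)
  then show ?thesis using pde_F[OF z] unfolding Z_def P_Z[OF z]
    by (simp add: algebra_simps)
qed


lemma cont_q2: "continuous_on S q2"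
  unfolding q2_def by (intro continuous_intros)

lemma q2_nonneg: "q2 y \<ge> 0"
  unfolding q2_def by simp

lemma in_frontier: "z \<in> closure \<Omega> \<Longrightarrow> z \<notin> \<Omega> \<Longrightarrow> z \<in> frontier \<Omega>"
  by (simp add: frontier_def interior_open[OF op])

lemma tr_pos: "x \<in> \<Omega> \<Longrightarrow> pd 1 (pd 1 F) x + pd 2 (pd 2 F) x > 0"
  using diag_pos[of x] cu by linarith

lemma w_lower:
  assumes bd: "bounded \<Omega>" and wc: "continuous_on (closure \<Omega>) w" and m: "m > 0"
    and wm: "\<And>y. y \<in> frontier \<Omega> \<Longrightarrow> m \<le> w y" and R: "R \<ge> 0" "\<And>y. y \<in> closure \<Omega> \<Longrightarrow> q2 y \<le> R"
    and x: "x \<in> \<Omega>"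
  shows "m / 2 \<le> w x"
proof -
  define \<epsilon> where "\<epsilon> = m / (2 * (R + 1))"
  have \<epsilon>: "\<epsilon> > 0" using m R by (simp add: \<epsilon>_def)
  have \<epsilon>R: "\<epsilon> * R \<le> m / 2"
  proof -
    have "\<epsilon> * R = (m / 2) * (R / (R + 1))" using R by (simp add: \<epsilon>_def field_simps)
    also have "\<dots> \<le> (m / 2) * 1" using m R by (intro mult_left_mono) auto
    finally show ?thesis by simp
  qed
  define Zc where "Zc y = w y + (- \<epsilon>) * q2 y" for y
  have cz: "continuous_on (closure \<Omega>) Zc" unfolding Zc_def
    by (intro continuous_intros wc cont_q2)
  have ne: "closure \<Omega> \<noteq> {}" using x closure_subset[of \<Omega>] by blast
  obtain z where z: "z \<in> closure \<Omega>" "\<And>y. y \<in> closure \<Omega> \<Longrightarrow> Zc z \<le> Zc y"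
    using continuous_attains_inf[OF compact_closure[THEN iffD2, OF bd] ne cz] by blast
  have zn: "z \<notin> \<Omega>"
  proof
    assume zO: "z \<in> \<Omega>"
    have "W0 z + (- \<epsilon>) * q2 z \<le> W0 y + (- \<epsilon>) * q2 y" if "y \<in> \<Omega>" for y
      using z(2)[of y] that zO closure_subset[of \<Omega>] by (auto simp: Zc_def w_W0)
    then have "rhs z + 2 * (- \<epsilon>) * (pd 1 (pd 1 F) z + pd 2 (pd 2 F) z) \<ge> 0"
      by (rule mp_min[OF zO])
    moreover have "2 * (- \<epsilon>) * (pd 1 (pd 1 F) z + pd 2 (pd 2 F) z) < 0"
      using \<epsilon> tr_pos[OF zO] by (simp add: mult_neg_pos)
    ultimately show False using rhs_bounds(1)[OF zO] by linarith
  qed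
  have zf: "z \<in> frontier \<Omega>" by (rule in_frontier[OF z(1) zn])
  have "Zc z \<ge> m - \<epsilon> * R"
  proof -
    have "\<epsilon> * q2 z \<le> \<epsilon> * R" using R(2)[OF z(1)] \<epsilon> by (simp add: mult_left_mono)
    then show ?thesis using wm[OF zf] by (simp add: Zc_def)
  qed
  moreover have "Zc z \<le> Zc x" using z(2) x closure_subset[of \<Omega>] by blast
  moreover have "w x \<ge> Zc x" using \<epsilon> q2_nonneg[of x] by (simp add: Zc_def)
  ultimately show ?thesis using \<epsilon>R by linarith
qed

lemma w_upper:
  assumes bd: "bounded \<Omega>" and wc: "continuous_on (closure \<Omega>) w" and A: "A \<ge> 0"
    and GL: "\<And>x. x \<in> \<Omega> \<Longrightarrow> norm (grad F x) \<le> L" and AL: "3 * L^2 < 2 * A"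
    and Mw: "\<And>y. y \<in> frontier \<Omega> \<Longrightarrow> w y \<le> M" and R: "\<And>y. y \<in> closure \<Omega> \<Longrightarrow> q2 y \<le> R"
    and x: "x \<in> \<Omega>"
  shows "w x \<le> M + A * R"
proof -
  define Zc where "Zc y = w y + A * q2 y" for y
  have cz: "continuous_on (closure \<Omega>) Zc" unfolding Zc_def
    by (intro continuous_intros wc cont_q2)
  have ne: "closure \<Omega> \<noteq> {}" using x closure_subset[of \<Omega>] by blast
  obtain z where z: "z \<in> closure \<Omega>" "\<And>y. y \<in> closure \<Omega> \<Longrightarrow> Zc y \<le> Zc z"
    using continuous_attains_sup[OF compact_closure[THEN iffD2, OF bd] ne cz] by blast
  have zn: "z \<notin> \<Omega>"
  proof
    assume zO: "z \<in> \<Omega>"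
    define tr where "tr = pd 1 (pd 1 F) z + pd 2 (pd 2 F) z"
    have trp: "tr > 0" using tr_pos[OF zO] by (simp add: tr_def)
    have "W0 y + A * q2 y \<le> W0 z + A * q2 z" if "y \<in> \<Omega>" for y
      using z(2)[of y] that zO closure_subset[of \<Omega>] by (auto simp: Zc_def w_W0)
    then have le: "rhs z + 2 * A * tr \<le> 0"
      unfolding tr_def by (rule mp_max[OF zO])
    have g: "(norm (grad F z))^2 \<le> L^2"
      using GL[OF zO] norm_ge_zero by (intro power_mono) auto
    have "rhs z \<ge> - 3 * (norm (grad F z))^2 * tr" using rhs_bounds(2)[OF zO] by (simp add: tr_def)
    moreover have "3 * (norm (grad F z))^2 * tr \<le> 3 * L^2 * tr"
      using g trp by (intro mult_right_mono) auto
    moreover have "3 * L^2 * tr < 2 * A * tr" using AL trp by (intro mult_strict_right_mono) auto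
    ultimately show False using le by linarith
  qed
  have zf: "z \<in> frontier \<Omega>" by (rule in_frontier[OF z(1) zn])
  have "Zc z \<le> M + A * R"
  proof -
    have "A * q2 z \<le> A * R" using R[OF z(1)] A by (simp add: mult_left_mono)
    then show ?thesis using Mw[OF zf] by (simp add: Zc_def)
  qed
  moreover have "Zc x \<le> Zc z" using z(2) x closure_subset[of \<Omega>] by blast
  moreover have "w x \<le> Zc x" using A q2_nonneg[of x] by (simp add: Zc_def)
  ultimately show ?thesis by linarith
qed

lemma comp:
  assumes bd: "bounded \<Omega>" and v: "C2 UNIV v" "continuous_on UNIV v" and s: "s \<ge> 0"
    and sv: "\<And>z \<xi>. z \<in> \<Omega> \<Longrightarrow> quadf v z \<xi> \<ge> s * (norm \<xi>)^2"
    and dl: "\<And>x. x \<in> \<Omega> \<Longrightarrow> det (hess u x) < s^2"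
    and fb: "\<And>y. y \<in> frontier \<Omega> \<Longrightarrow> F y = v y" and y: "y \<in> closure \<Omega>"
  shows "v y \<le> F y"
proof -
  define Y where "Y y = F y - v y" for y
  have C2F: "C2 UNIV F" using smooth_facts(7)[OF F] .
  have cY: "continuous_on (closure \<Omega>) Y" unfolding Y_def
    using smooth_facts(6)[OF F] v(2)
    by (intro continuous_intros) (auto intro: continuous_on_subset)
  have ne: "closure \<Omega> \<noteq> {}" using y by auto
  obtain z where z: "z \<in> closure \<Omega>" "\<And>y. y \<in> closure \<Omega> \<Longrightarrow> Y z \<le> Y y"
    using continuous_attains_inf[OF compact_closure[THEN iffD2, OF bd] ne cY] by blast
  have C2Y: "C2 UNIV Y" unfolding Y_def[abs_def] by (rule C2_diff[OF open_UNIV C2F v(1)])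
  have zn: "z \<notin> \<Omega>"
  proof
    assume zO: "z \<in> \<Omega>"
    have "quadf F z \<xi> \<ge> s * (norm \<xi>)^2" for \<xi>
    proof -
      have "quadf Y z \<xi> \<ge> 0"
        by (rule min_hess[OF op zO]) (use C2_D1[OF C2Y] C2_D2[OF C2Y] z(2) closure_subset[of \<Omega>] in auto)
      moreover have "quadf Y z \<xi> = quadf F z \<xi> - quadf v z \<xi>"
        unfolding quadf_def Y_def[abs_def] pd2_diff[OF open_UNIV C2F v(1) UNIV_I]
        by (simp add: sum_2 algebra_simps)
      ultimately show ?thesis using sv[OF zO, of \<xi>] by linarith
    qed
    then have "det (hess F z) \<ge> s^2" using det_ge[OF _ s] unfolding quadf_hess by blast
    then show False using dl[OF zO] hess_uF[OF zO] by simp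
  qed
  have zf: "z \<in> frontier \<Omega>" by (rule in_frontier[OF z(1) zn])
  have "Y z = 0" using fb[OF zf] by (simp add: Y_def)
  then show ?thesis using z(2)[OF y] by (simp add: Y_def)
qed

lemma grad_bd:
  assumes bd: "bounded \<Omega>" and v: "C2 UNIV v"
    and ge: "\<And>y. y \<in> closure \<Omega> \<Longrightarrow> v y \<le> F y"
    and fb: "\<And>y. y \<in> frontier \<Omega> \<Longrightarrow> F y = v y"
    and L: "\<And>y. y \<in> closure \<Omega> \<Longrightarrow> \<bar>pd 1 v y\<bar> + \<bar>pd 2 v y\<bar> \<le> L"
    and x: "x \<in> \<Omega>"
  shows "norm (grad F x) \<le> L"
proof (cases "grad F x = 0")
  case True
  have "0 \<le> L" using L[of x] x closure_subset[of \<Omega>] by force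
  then show ?thesis using True by simp
next
  case False
  define p where "p = grad F x"
  have np: "norm p > 0" using False by (simp add: p_def)
  define e where "e = p /\<^sub>R norm p"
  have ne: "norm e = 1" using np by (simp add: e_def)
  define T where "T = {t::real. 0 \<le> t \<and> x + t *\<^sub>R e \<notin> \<Omega>}"
  obtain r where r: "\<And>y. y \<in> \<Omega> \<Longrightarrow> norm y \<le> r" using bd unfolding bounded_iff by blast
  have Tne: "T \<noteq> {}"
  proof -
    define t0 where "t0 = \<bar>r\<bar> + norm x + 1"
    have "norm (t0 *\<^sub>R e) \<le> norm (x + t0 *\<^sub>R e) + norm x"
      using norm_triangle_ineq4[of "x + t0 *\<^sub>R e" x] by simp
    moreover have "norm (t0 *\<^sub>R e) = t0" using ne by (simp add: t0_def)
    ultimately have "t0 \<le> norm (x + t0 *\<^sub>R e) + norm x" by simp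
    then have "norm (x + t0 *\<^sub>R e) > r" unfolding t0_def using abs_ge_self[of r] by linarith
    then have "t0 \<in> T" using r by (force simp: T_def t0_def)
    then show ?thesis by blast
  qed
  obtain \<delta> where \<delta>: "\<delta> > 0" "ball x \<delta> \<subseteq> \<Omega>" using op x open_contains_ball by blast
  have inO: "x + t *\<^sub>R e \<in> \<Omega>" if "0 \<le> t" "t < \<delta>" for t
  proof -
    have "dist x (x + t *\<^sub>R e) = t" using ne that by (simp add: dist_norm)
    then show ?thesis using \<delta> that by auto
  qed
  define ts where "ts = Inf T"
  have bdb: "bdd_below T" unfolding bdd_below_def T_def by auto
  have ts\<delta>: "\<delta> \<le> ts" unfolding ts_def
  proof (rule cInf_greatest[OF Tne])
    fix t assume "t \<in> T"
    then show "\<delta> \<le> t" using inO unfolding T_def by force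
  qed
  have tsp: "ts > 0" using ts\<delta> \<delta> by simp
  have seg: "x + t *\<^sub>R e \<in> \<Omega>" if "0 \<le> t" "t < ts" for t
  proof (rule ccontr)
    assume "x + t *\<^sub>R e \<notin> \<Omega>"
    then have "t \<in> T" using that by (simp add: T_def)
    then have "ts \<le> t" unfolding ts_def by (rule cInf_lower[OF _ bdb])
    then show False using that by simp
  qed
  define y where "y = x + ts *\<^sub>R e"
  have yn: "y \<notin> \<Omega>"
  proof
    assume "y \<in> \<Omega>"
    then obtain \<delta>' where \<delta>': "\<delta>' > 0" "ball y \<delta>' \<subseteq> \<Omega>" using op open_contains_ball by blast
    have "Inf T < ts + \<delta>'" using \<delta>' by (simp add: ts_def)
    then obtain t where t: "t \<in> T" "t < ts + \<delta>'" using cInf_lessD[OF Tne] by blast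
    have "ts \<le> t" unfolding ts_def by (rule cInf_lower[OF t(1) bdb])
    have "dist y (x + t *\<^sub>R e) = \<bar>t - ts\<bar>"
    proof -
      have "y - (x + t *\<^sub>R e) = (ts - t) *\<^sub>R e" by (simp add: y_def algebra_simps)
      then show ?thesis using ne by (simp add: dist_norm)
    qed
    then have "x + t *\<^sub>R e \<in> \<Omega>" using \<delta>' t \<open>ts \<le> t\<close> by auto
    then show False using t(1) by (simp add: T_def)
  qed
  have yc: "y \<in> closure \<Omega>"
    unfolding closure_approachable
  proof (intro allI impI)
    fix \<epsilon> :: real assume \<epsilon>: "\<epsilon> > 0"
    define t where "t = max 0 (ts - \<epsilon> / 2)"
    have t: "0 \<le> t" "t < ts" "ts - t < \<epsilon>" using tsp \<epsilon> by (auto simp: t_def)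
    have "dist (x + t *\<^sub>R e) y = \<bar>ts - t\<bar>"
    proof -
      have "(x + t *\<^sub>R e) - y = (t - ts) *\<^sub>R e" by (simp add: y_def algebra_simps)
      then show ?thesis using ne by (simp add: dist_norm)
    qed
    then show "\<exists>y'\<in>\<Omega>. dist y' y < \<epsilon>" using seg[OF t(1,2)] t by (intro bexI[of _ "x + t *\<^sub>R e"]) auto
  qed
  have yf: "y \<in> frontier \<Omega>" by (rule in_frontier[OF yc yn])
  have Fd: "\<And>y. F differentiable (at y)" using smooth_facts(1)[OF F] .
  have Fd2: "\<And>j y. pd j F differentiable (at y)" using smooth_facts(2)[OF F] .
  define g' where "g' t = (\<Sum>j\<in>UNIV. e$j * pd j F (x + t *\<^sub>R e))" for t
  have dg: "((\<lambda>t. F (x + t *\<^sub>R e)) has_real_derivative g' t) (at t)" for t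
    unfolding g'_def by (rule line_deriv[OF Fd])
  have dg': "(g' has_real_derivative quadf F (x + t *\<^sub>R e) e) (at t)" for t
  proof -
    have "((\<lambda>s. pd j F (x + s *\<^sub>R e)) has_real_derivative (\<Sum>i\<in>UNIV. e$i * pd i (pd j F) (x + t *\<^sub>R e))) (at t)" for j
      by (rule line_deriv[OF Fd2])
    then have "(g' has_real_derivative
        (\<Sum>j\<in>UNIV. e$j * (\<Sum>i\<in>UNIV. e$i * pd i (pd j F) (x + t *\<^sub>R e)))) (at t)"
      unfolding g'_def[abs_def] by (auto intro!: derivative_eq_intros simp: mult.commute)
    moreover have "(\<Sum>j\<in>UNIV. e$j * (\<Sum>i\<in>UNIV. e$i * pd i (pd j F) (x + t *\<^sub>R e))) = quadf F (x + t *\<^sub>R e) e"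
      unfolding quadf_def by (simp add: sum_2 algebra_simps)
    ultimately show ?thesis by simp
  qed
  obtain \<tau> where \<tau>: "0 < \<tau>" "\<tau> < ts" "F (x + ts *\<^sub>R e) - F (x + 0 *\<^sub>R e) = (ts - 0) * g' \<tau>"
    using MVT2[OF tsp, of "\<lambda>t. F (x + t *\<^sub>R e)" g'] dg by blast
  have g'mono: "g' 0 \<le> g' \<tau>"
  proof (rule DERIV_nonneg_imp_increasing_open[of 0 \<tau> g'])
    show "0 \<le> \<tau>" using \<tau> by simp
    fix s assume s: "0 < s" "s < \<tau>"
    have "x + s *\<^sub>R e \<in> \<Omega>" using seg s \<tau> by simp
    then have "quadf F (x + s *\<^sub>R e) e \<ge> 0" unfolding quadf_hess using posF0 by simp
    then show "\<exists>y. (g' has_real_derivative y) (at s) \<and> 0 \<le> y" using dg' by blast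
  next
    show "continuous_on {0..\<tau>} g'"
      by (rule DERIV_continuous_on) (rule has_field_derivative_at_within[OF dg'])
  qed
  have g0: "g' 0 = norm p"
  proof -
    have "g' 0 = e \<bullet> p" by (simp add: g'_def inner_vec_def sum_2 p_def grad_def)
    also have "\<dots> = (p \<bullet> p) / norm p" by (simp add: e_def divide_inverse_commute)
    also have "\<dots> = norm p" using np by (simp add: power2_norm_eq_inner[symmetric] power2_eq_square)
    finally show ?thesis .
  qed
  have Fy: "F y - F x \<ge> ts * norm p" using \<tau> g'mono g0 tsp
    by (simp add: y_def mult_left_mono)
  define h' where "h' t = (\<Sum>j\<in>UNIV. e$j * pd j v (x + t *\<^sub>R e))" for t
  have dh: "((\<lambda>t. v (x + t *\<^sub>R e)) has_real_derivative h' t) (at t)" for t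
    unfolding h'_def by (rule line_deriv) (use C2_D1[OF v] in auto)
  obtain \<tau>' where \<tau>': "0 < \<tau>'" "\<tau>' < ts" "v (x + ts *\<^sub>R e) - v (x + 0 *\<^sub>R e) = (ts - 0) * h' \<tau>'"
    using MVT2[OF tsp, of "\<lambda>t. v (x + t *\<^sub>R e)" h'] dh by blast
  have hL: "h' \<tau>' \<le> L"
  proof -
    have pt: "x + \<tau>' *\<^sub>R e \<in> closure \<Omega>" using seg[of \<tau>'] \<tau>' closure_subset[of \<Omega>] by auto
    have e1: "\<bar>e$1\<bar> \<le> 1" "\<bar>e$2\<bar> \<le> 1" using component_le_norm_cart[of e] ne by auto
    have "h' \<tau>' \<le> \<bar>e$1\<bar> * \<bar>pd 1 v (x + \<tau>' *\<^sub>R e)\<bar> + \<bar>e$2\<bar> * \<bar>pd 2 v (x + \<tau>' *\<^sub>R e)\<bar>"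
      unfolding h'_def sum_2 abs_mult[symmetric] by linarith
    also have "\<dots> \<le> 1 * \<bar>pd 1 v (x + \<tau>' *\<^sub>R e)\<bar> + 1 * \<bar>pd 2 v (x + \<tau>' *\<^sub>R e)\<bar>"
      using e1 by (intro add_mono mult_right_mono) auto
    also have "\<dots> \<le> L" using L[OF pt] by simp
    finally show ?thesis .
  qed
  have "F y = v y" using fb[OF yf] .
  moreover have "v x \<le> F x" using ge x closure_subset[of \<Omega>] by auto
  moreover have "v y - v x \<le> ts * L" using \<tau>' hL tsp by (simp add: y_def mult_left_mono)
  ultimately have "ts * norm p \<le> ts * L" using Fy by linarith
  then show ?thesis using tsp by (simp add: p_def)
qed
end

lemma cont_q2g: "continuous_on S q2"
  unfolding q2_def by (intro continuous_intros)

lemma quadf_abs: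
  "\<bar>quadf f z \<xi>\<bar> \<le> (\<Sum>i\<in>UNIV. \<Sum>j\<in>UNIV. \<bar>pd i (pd j f) z\<bar>) * (norm \<xi>)^2"
proof -
  have c: "\<bar>\<xi>$i\<bar> \<le> norm \<xi>" for i using component_le_norm_cart .
  have t: "\<bar>\<xi>$i * \<xi>$j * pd i (pd j f) z\<bar> \<le> \<bar>pd i (pd j f) z\<bar> * (norm \<xi>)^2" for i j
  proof -
    have "\<bar>\<xi>$i * \<xi>$j\<bar> \<le> norm \<xi> * norm \<xi>"
      unfolding abs_mult by (intro mult_mono c) auto
    then have "\<bar>\<xi>$i * \<xi>$j\<bar> * \<bar>pd i (pd j f) z\<bar> \<le> (norm \<xi> * norm \<xi>) * \<bar>pd i (pd j f) z\<bar>"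
      by (intro mult_right_mono) auto
    then show ?thesis by (simp add: abs_mult power2_eq_square algebra_simps)
  qed
  show ?thesis
    unfolding quadf_def sum_2 using t[of 1 1] t[of 1 2] t[of 2 1] t[of 2 2]
    by (simp add: algebra_simps) linarith
qed

theorem mainTheorem3:
  fixes \<Omega> :: "(real^2) set" and \<phi> \<psi> :: "real^2 \<Rightarrow> real"
  assumes "open \<Omega>" and "bounded \<Omega>" and "smooth_unif_convex_domain \<Omega>"
    and "smooth_upto \<Omega> \<phi>" and "smooth_upto \<Omega> \<psi>"
    and "\<forall>x\<in>frontier \<Omega>. \<psi> x > 0"
  shows "\<exists>C>1. \<forall>u w. is_solution \<Omega> \<phi> \<psi> u w \<longrightarrow>
           (\<forall>x\<in>\<Omega>. norm (grad u x) \<le> C) \<and>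
           (\<forall>x\<in>\<Omega>. 1 / C \<le> det (hess u x) \<and> det (hess u x) \<le> C)"
proof -
  note op = assms(1) and bd = assms(2)
  obtain \<rho> where \<rho>: "smooth_on UNIV \<rho>" "\<Omega> = {x. \<rho> x < 0}" "unif_pos_def_on (closure \<Omega>) (hess \<rho>)"
    using assms(3) unfolding smooth_unif_convex_domain_def by blast
  obtain c\<rho> where c\<rho>: "c\<rho> > 0" "\<And>x \<xi>. x \<in> closure \<Omega> \<Longrightarrow> \<xi> \<bullet> (hess \<rho> x *v \<xi>) \<ge> c\<rho> * (norm \<xi>)^2"
    using \<rho>(3) unfolding unif_pos_def_on_def by blast
  obtain \<Phi> where \<Phi>: "smooth_on UNIV \<Phi>" "\<And>x. x \<in> closure \<Omega> \<Longrightarrow> \<Phi> x = \<phi> x"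
    using assms(4) unfolding smooth_upto_def by blast
  obtain \<Psi> where \<Psi>: "smooth_on UNIV \<Psi>" "\<And>x. x \<in> closure \<Omega> \<Longrightarrow> \<Psi> x = \<psi> x"
    using assms(5) unfolding smooth_upto_def by blast
  have KC: "compact (closure \<Omega>)" using bd by simp
  have KF: "compact (frontier \<Omega>)" using bd by (rule compact_frontier_bounded)
  have fc: "frontier \<Omega> \<subseteq> closure \<Omega>" by (simp add: frontier_def)
  have fnO: "y \<in> frontier \<Omega> \<Longrightarrow> y \<notin> \<Omega>" for y by (simp add: frontier_def interior_open[OF op])
  have c\<Psi>: "continuous_on K \<Psi>" for K
    using smooth_facts(6)[OF \<Psi>(1)] by (rule continuous_on_subset) simp
  obtain m where m: "m > 0" "\<And>y. y \<in> frontier \<Omega> \<Longrightarrow> m \<le> \<Psi> y"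
    using cpos_lb[OF KF c\<Psi>] assms(6) \<Psi>(2) fc by fastforce
  obtain B1 where B1: "B1 \<ge> 0" "\<And>y. y \<in> frontier \<Omega> \<Longrightarrow> \<bar>\<Psi> y\<bar> \<le> B1"
    using cbd[OF KF c\<Psi>] by blast
  obtain R0 where R0: "R0 \<ge> 0" "\<And>y. y \<in> closure \<Omega> \<Longrightarrow> \<bar>q2 y\<bar> \<le> R0"
    using cbd[OF KC cont_q2g] by blast
  define MP where "MP y = (\<Sum>i\<in>UNIV. \<Sum>j\<in>UNIV. \<bar>pd i (pd j \<Phi>) y\<bar>)" for y
  have cMP: "continuous_on (closure \<Omega>) MP" unfolding MP_def
    using smooth_facts(4)[OF \<Phi>(1)]
    by (intro continuous_intros) (auto intro: continuous_on_subset)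
  obtain M\<Phi> where M\<Phi>: "M\<Phi> \<ge> 0" "\<And>y. y \<in> closure \<Omega> \<Longrightarrow> \<bar>MP y\<bar> \<le> M\<Phi>"
    using cbd[OF KC cMP] by blast
  define s where "s = 2 / m + 1"
  have s: "s > 0" "2 / m < s^2"
  proof -
    show "s > 0" using m by (simp add: s_def add_pos_nonneg)
    have "s \<ge> 1" using m by (simp add: s_def)
    then have "s \<le> s^2" by (simp add: power2_eq_square)
    moreover have "2 / m < s" by (simp add: s_def)
    ultimately show "2 / m < s^2" by linarith
  qed
  define K where "K = (M\<Phi> + s) / c\<rho>"
  have K: "K \<ge> 0" "K * c\<rho> = M\<Phi> + s" using M\<Phi> s c\<rho> by (auto simp: K_def)
  define v where "v y = \<Phi> y + K * \<rho> y" for y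
  have C2\<Phi>: "C2 UNIV \<Phi>" using smooth_facts(7)[OF \<Phi>(1)] .
  have C2\<rho>: "C2 UNIV \<rho>" using smooth_facts(7)[OF \<rho>(1)] .
  have C2v: "C2 UNIV v" unfolding v_def[abs_def]
    by (intro C2_add C2_mult C2_const C2\<Phi> C2\<rho> open_UNIV)
  have cv: "continuous_on UNIV v" unfolding v_def[abs_def]
    using smooth_facts(6)[OF \<Phi>(1)] smooth_facts(6)[OF \<rho>(1)] by (intro continuous_intros) auto
  have pdv: "pd j v = (\<lambda>y. pd j \<Phi> y + K * pd j \<rho> y)" for j
  proof
    fix y
    have "pd j v y = pd j \<Phi> y + pd j (\<lambda>y. K * \<rho> y) y"
      unfolding v_def[abs_def] by (rule pd_add) (use C2_D1[OF C2\<Phi>] C2_D1[OF C2\<rho>] in auto)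
    also have "pd j (\<lambda>y. K * \<rho> y) y = K * pd j \<rho> y + pd j (\<lambda>y. K) y * \<rho> y"
      by (rule pd_mult) (use C2_D1[OF C2\<rho>] in auto)
    finally show "pd j v y = pd j \<Phi> y + K * pd j \<rho> y" by (simp add: pd_const)
  qed
  have cpdv: "continuous_on (closure \<Omega>) (\<lambda>y. \<bar>pd 1 v y\<bar> + \<bar>pd 2 v y\<bar>)" unfolding pdv
    using smooth_facts(5)[OF \<Phi>(1)] smooth_facts(5)[OF \<rho>(1)]
    by (intro continuous_intros) (auto intro: continuous_on_subset)
  obtain L where L: "L \<ge> 0" "\<And>y. y \<in> closure \<Omega> \<Longrightarrow> \<bar>\<bar>pd 1 v y\<bar> + \<bar>pd 2 v y\<bar>\<bar> \<le> L"
    using cbd[OF KC cpdv] by blast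
  define A where "A = 2 * L^2 + 1"
  have l2: "L^2 \<ge> 0" by simp
  have A2: "2 * A = 4 * L^2 + 2" by (simp add: A_def)
  have A: "A \<ge> 0" "3 * L^2 < 2 * A" using A2 l2 by linarith+
  define C where "C = 1 + L + 2 / m + (B1 + A * R0)"
  have m2: "2 / m > 0" using m by simp
  have AR: "A * R0 \<ge> 0" using A R0 by simp
  have Cp: "C > 1" using L m2 B1 AR unfolding C_def by linarith
  have \<rho>0: "\<rho> y = 0" if "y \<in> frontier \<Omega>" for y
  proof -
    have cl: "closed {x. \<rho> x \<le> 0}"
      using smooth_facts(6)[OF \<rho>(1)] by (intro closed_Collect_le) auto
    have "closure \<Omega> \<subseteq> {x. \<rho> x \<le> 0}" by (rule closure_minimal) (use \<rho>(2) cl in auto)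
    then show ?thesis using that fc fnO[OF that] \<rho>(2) by force
  qed
  have qv: "quadf v z \<xi> \<ge> s * (norm \<xi>)^2" if z: "z \<in> \<Omega>" for z \<xi>
  proof -
    have zc: "z \<in> closure \<Omega>" using z closure_subset[of \<Omega>] by auto
    have "quadf v z \<xi> = quadf \<Phi> z \<xi> + K * quadf \<rho> z \<xi>"
      unfolding quadf_def v_def[abs_def] pd2_lin[OF open_UNIV C2\<Phi> C2\<rho> UNIV_I]
      by (simp add: sum_2 algebra_simps)
    moreover have "quadf \<rho> z \<xi> \<ge> c\<rho> * (norm \<xi>)^2" unfolding quadf_hess using c\<rho>(2)[OF zc] .
    moreover have "quadf \<Phi> z \<xi> \<ge> - M\<Phi> * (norm \<xi>)^2"
    proof -
      have "\<bar>quadf \<Phi> z \<xi>\<bar> \<le> MP z * (norm \<xi>)^2" using quadf_abs by (simp add: MP_def)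
      also have "\<dots> \<le> M\<Phi> * (norm \<xi>)^2" using M\<Phi>(2)[OF zc] by (intro mult_right_mono) auto
      finally show ?thesis by linarith
    qed
    ultimately have "quadf v z \<xi> \<ge> - M\<Phi> * (norm \<xi>)^2 + K * (c\<rho> * (norm \<xi>)^2)"
      using mult_left_mono[OF _ K(1)] by (metis add_mono)
    also have "- M\<Phi> * (norm \<xi>)^2 + K * (c\<rho> * (norm \<xi>)^2) = s * (norm \<xi>)^2"
    proof -
      have "K * (c\<rho> * (norm \<xi>)^2) = (K * c\<rho>) * (norm \<xi>)^2" by simp
      then show ?thesis unfolding K(2) by (simp add: algebra_simps)
    qed
    finally show ?thesis .
  qed
  show ?thesis
  proof (intro exI[of _ C] conjI allI impI Cp)
    fix u w assume sol: "is_solution \<Omega> \<phi> \<psi> u w"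
    obtain F where F: "smooth_on UNIV F" "\<And>x. x \<in> closure \<Omega> \<Longrightarrow> F x = u x"
      using sol unfolding is_solution_def smooth_upto_def by metis
    obtain cu where cu: "cu > 0" "\<And>x \<xi>. x \<in> \<Omega> \<Longrightarrow> \<xi> \<bullet> (hess u x *v \<xi>) \<ge> cu * (norm \<xi>)^2"
      using sol unfolding is_solution_def unif_pos_def_on_def by metis
    have wc: "continuous_on (closure \<Omega>) w" and wdef: "\<And>x. x \<in> \<Omega> \<Longrightarrow> w x = 1 / det (hess u x)"
      and bu: "\<And>x. x \<in> frontier \<Omega> \<Longrightarrow> u x = \<phi> x" and bw: "\<And>x. x \<in> frontier \<Omega> \<Longrightarrow> w x = \<psi> x"
      using sol unfolding is_solution_def by auto
    have pde: "\<forall>x\<in>\<Omega>. (let U = det (hess u x) *\<^sub>R matrix_inv (hess u x) in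
         (\<Sum>i\<in>UNIV. \<Sum>j\<in>UNIV. U $ i $ j * pd i (pd j w) x))
        = - (norm (grad u x))\<^sup>2 * lap u x
          - 2 * (\<Sum>i\<in>UNIV. \<Sum>j\<in>UNIV. grad u x $ i * grad u x $ j * pd i (pd j u) x)"
      using sol unfolding is_solution_def by blast
    interpret S: sol \<Omega> u w F cu
      by (rule sol.intro[OF op F(1) F(2) cu(1) cu(2) wdef pde])
    have wm: "m \<le> w y" if "y \<in> frontier \<Omega>" for y using m(2)[OF that] bw[OF that] \<Psi>(2) fc that by auto
    have wM: "w y \<le> B1" if "y \<in> frontier \<Omega>" for y using B1(2)[OF that] bw[OF that] \<Psi>(2) fc that by force
    have Rq: "q2 y \<le> R0" if "y \<in> closure \<Omega>" for y using R0(2)[OF that] by simp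
    have dpos: "det (hess u x) > 0" if x: "x \<in> \<Omega>" for x
    proof -
      have c2: "cu^2 > 0" using cu by simp
      have "det (hess F x) \<ge> cu^2" using S.det_pos[OF x] by (simp add: dH_def)
      then have "det (hess F x) > 0" using c2 by linarith
      then show ?thesis using S.hess_uF[OF x] by simp
    qed
    have dup: "det (hess u x) \<le> 2 / m" if x: "x \<in> \<Omega>" for x
    proof -
      have "m / 2 \<le> w x" by (rule S.w_lower[OF bd wc m(1) wm R0(1) Rq x])
      then have "m / 2 \<le> 1 / det (hess u x)" using wdef[OF x] by simp
      then show ?thesis using dpos[OF x] m(1) by (simp add: field_simps)
    qed
    have Fv: "F y = v y" if "y \<in> frontier \<Omega>" for y
      using F(2)[of y] bu[OF that] \<Phi>(2)[of y] \<rho>0[OF that] fc that by (auto simp: v_def)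
    have dl: "det (hess u x) < s^2" if "x \<in> \<Omega>" for x
      using dup[OF that] s(2) by linarith
    have ge: "v y \<le> F y" if "y \<in> closure \<Omega>" for y
      by (rule S.comp[OF bd C2v cv less_imp_le[OF s(1)] qv dl Fv that])
    have gb: "norm (grad F x) \<le> L" if "x \<in> \<Omega>" for x
    proof (rule S.grad_bd[OF bd C2v ge Fv _ that])
      fix y assume y: "y \<in> closure \<Omega>"
      have "\<bar>\<bar>pd 1 v y\<bar> + \<bar>pd 2 v y\<bar>\<bar> = \<bar>pd 1 v y\<bar> + \<bar>pd 2 v y\<bar>" by simp
      then show "\<bar>pd 1 v y\<bar> + \<bar>pd 2 v y\<bar> \<le> L" using L(2)[OF y] by linarith
    qed
    show "\<forall>x\<in>\<Omega>. norm (grad u x) \<le> C"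
    proof
      fix x assume x: "x \<in> \<Omega>"
      have "norm (grad u x) \<le> L" using gb[OF x] S.grad_uF[OF x] by simp
      then show "norm (grad u x) \<le> C" using m2 B1(1) AR unfolding C_def by linarith
    qed
    show "\<forall>x\<in>\<Omega>. 1 / C \<le> det (hess u x) \<and> det (hess u x) \<le> C"
    proof
      fix x assume x: "x \<in> \<Omega>"
      have wu: "w x \<le> B1 + A * R0" by (rule S.w_upper[OF bd wc A(1) gb A(2) wM Rq x])
      have wp: "w x > 0" using wdef[OF x] dpos[OF x] by simp
      have "det (hess u x) = 1 / w x" using wdef[OF x] dpos[OF x] by simp
      moreover have "1 / C \<le> 1 / w x"
      proof (rule divide_left_mono)
        show "w x \<le> C" using wu L(1) m2 unfolding C_def by linarith
        show "0 < C * w x" using Cp wp by simp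
      qed simp
      ultimately have "1 / C \<le> det (hess u x)" by simp
      moreover have "det (hess u x) \<le> C" using dup[OF x] L(1) B1(1) AR unfolding C_def by linarith
      ultimately show "1 / C \<le> det (hess u x) \<and> det (hess u x) \<le> C" by simp
    qed
  qed
qed


end
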